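(* Let $\widetilde{\mathbb{F}}$ be a field of characteristic $p>2$, let $q=p^\ell$ with $\ell\geq 1$, and let $f:\mathbb{F}_q\to\widetilde{\mathbb{F}}$ be an SD-map. Then $f$ is a field isomorphism of $\mathbb{F}_q$ onto a copy of $\mathbb{F}_q$ (i.e.\ a field automorphism of $\mathbb{F}_q$ up to this identification), except when $q=p=5$, in which case $f$ may alternatively be (and can only otherwise be) the map $w\mapsto w^3$, where $\mathbb{F}_5$ is identified with the prime subfield of $\widetilde{\mathbb{F}}$.
   Context: $\mathbb{F}_q$ is the finite field with $q$ elements. A map $f:\mathbb{F}\to\widetilde{\mathbb{F}}$ between fields is called an SD-map if for all $x\neq y$ in $\mathbb{F}$ one has $f(x)\neq f(y)$ and \[ f\left(\frac{x+y}{x-y}\right)=\frac{f(x)+f(y)}{f(x)-f(y)}. \] *)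

theory Defs
  imports Main "HOL-Computational_Algebra.Primes"
begin

definition SD_map :: "('a::field \<Rightarrow> 'b::field) \<Rightarrow> bool" where
  "SD_map f \<longleftrightarrow> (\<forall>x y. x \<noteq> y \<longrightarrow>
      f x \<noteq> f y \<and> f ((x + y) / (x - y)) = (f x + f y) / (f x - f y))"

definition field_hom :: "('a::field \<Rightarrow> 'b::field) \<Rightarrow> bool" where
  "field_hom f \<longleftrightarrow> f 1 = 1 \<and> (\<forall>x y. f (x + y) = f x + f y \<and> f (x * y) = f x * f y)"

end

theory Submission
  imports Defs "HOL-Number_Theory.Residues" "HOL-Computational_Algebra.Euclidean_Algorithm"
begin

lemma sd_inj: "SD_map f \<Longrightarrow> x \<noteq> y \<Longrightarrow> f x \<noteq> f y"
  unfolding SD_map_def by blast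

lemma sd_eq: "SD_map f \<Longrightarrow> x \<noteq> y \<Longrightarrow> f ((x + y) / (x - y)) = (f x + f y) / (f x - f y)"
  unfolding SD_map_def by blast

lemma sd_01:
  fixes f :: "'a::field \<Rightarrow> 'b::field"
  assumes sd: "SD_map f" and two_a: "(2::'a) \<noteq> 0" and two_b: "(2::'b) \<noteq> 0"
  shows "f 0 = 0 \<and> f 1 = 1"
proof -
  have key: "f 1 * (f x - f 0) = f x + f 0" if "x \<noteq> 0" for x
  proof -
    have "f ((x + 0) / (x - 0)) = (f x + f 0) / (f x - f 0)" using sd_eq[OF sd that] .
    moreover have "(x + 0) / (x - 0) = 1" using that by simp
    moreover have "f x - f 0 \<noteq> 0" using sd_inj[OF sd that] by simp
    ultimately show ?thesis by (simp add: field_simps)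
  qed
  have m1: "(-1::'a) \<noteq> 1"
  proof
    assume "(-1::'a) = 1"
    hence "(2::'a) = 1 + -1" by (metis one_add_one)
    thus False using two_a by simp
  qed
  have a: "f 1 * (f 1 - f 0) = f 1 + f 0" using key[of 1] by simp
  have b: "f 1 * (f (-1) - f 0) = f (-1) + f 0" using key[of "-1"] by simp
  have ne: "f 1 \<noteq> f (-1)" using sd_inj[OF sd] m1 by metis
  have "(f 1 - 1) * (f 1 - f (-1)) = 0" using a b by (simp add: algebra_simps)
  hence f1: "f 1 = 1" using ne by simp
  have "2 * f 0 = 0" using a f1 by (simp add: algebra_simps)
  hence "f 0 = 0" using two_b by simp
  thus ?thesis using f1 by simp
qed

lemma sd_odd:
  fixes f :: "'a::field \<Rightarrow> 'b::field"
  assumes sd: "SD_map f" and two_a: "(2::'a) \<noteq> 0" and f0: "f 0 = 0"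
  shows "f (-x) = - f x"
proof (cases "x = 0")
  case True thus ?thesis using f0 by simp
next
  case False
  have ne: "x \<noteq> -x"
  proof
    assume h: "x = -x"
    have "2 * x = x + x" by (rule mult_2)
    also have "\<dots> = x + -x" using h by (rule arg_cong)
    finally have "2 * x = 0" by simp
    thus False using False two_a by simp
  qed
  have "f ((x + -x) / (x - -x)) = (f x + f (-x)) / (f x - f (-x))" using sd_eq[OF sd ne] .
  hence "(f x + f (-x)) / (f x - f (-x)) = 0" using f0 by simp
  moreover have "f x - f (-x) \<noteq> 0" using sd_inj[OF sd ne] by simp
  ultimately have "f x + f (-x) = 0" by simp
  thus ?thesis by (simp add: eq_neg_iff_add_eq_0 add.commute)
qed

lemma sd_mult:
  fixes f :: "'a::field \<Rightarrow> 'b::field"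
  assumes sd: "SD_map f" and two_b: "(2::'b) \<noteq> 0" and f0: "f 0 = 0" and f1: "f 1 = 1"
  shows "f (t * x) = f t * f x"
proof (cases "x = 0 \<or> t = 1")
  case True thus ?thesis using f0 f1 by auto
next
  case False
  hence x0: "x \<noteq> 0" and t1: "t \<noteq> 1" by auto
  have ne1: "x \<noteq> t * x" using x0 t1 by simp
  have e1: "f ((x + t * x) / (x - t * x)) = (f x + f (t*x)) / (f x - f (t*x))" using sd_eq[OF sd ne1] .
  have ne2: "(1::'a) \<noteq> t" using t1 by simp
  have e2: "f ((1 + t) / (1 - t)) = (f 1 + f t) / (f 1 - f t)" using sd_eq[OF sd ne2] .
  have "(x + t * x) / (x - t * x) = (1 + t) / (1 - t)" using x0 t1
    by (simp add: field_simps)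
  hence eq: "(f x + f (t*x)) / (f x - f (t*x)) = (1 + f t) / (1 - f t)" using e1 e2 f1 by simp
  have d1: "f x - f (t*x) \<noteq> 0" using sd_inj[OF sd ne1] by simp
  have d2: "1 - f t \<noteq> 0" using sd_inj[OF sd ne2] f1 by simp
  from eq d1 d2 have "(f x + f (t*x)) * (1 - f t) = (1 + f t) * (f x - f (t*x))"
    by (simp add: frac_eq_eq)
  hence "2 * f (t*x) = 2 * (f t * f x)" by (simp add: algebra_simps)
  thus ?thesis using two_b by simp
qed



locale sdm =
  fixes f :: "'a::field \<Rightarrow> 'b::field"
  assumes sd: "SD_map f" and two_a: "(2::'a) \<noteq> 0" and two_b: "(2::'b) \<noteq> 0"
begin

lemma f0: "f 0 = 0" using sd_01[OF sd two_a two_b] by simp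
lemma f1: "f 1 = 1" using sd_01[OF sd two_a two_b] by simp
lemma fneg: "f (-x) = - f x" using sd_odd[OF sd two_a f0] .
lemma fmult: "f (t * x) = f t * f x" using sd_mult[OF sd two_b f0 f1] .
lemma finj: "f x = f y \<longleftrightarrow> x = y" using sd_inj[OF sd] by metis
lemma fz: "f x = 0 \<longleftrightarrow> x = 0" using finj[of x 0] f0 by simp
lemma fm1: "f (-1) = -1" using fneg[of 1] f1 by simp

lemma finv: "f (inverse x) = inverse (f x)"
proof (cases "x = 0")
  case True thus ?thesis using f0 by simp
next
  case False
  have "f x * f (inverse x) = 1" using fmult[of x "inverse x"] False f1 by simp
  from inverse_unique[OF this] show ?thesis by simp
qed

lemma fdiv: "f (x / y) = f x / f y"
  using fmult[of x "inverse y"] finv by (simp add: divide_inverse)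

lemma fA: "f (1 + t) * (1 - f t) = f (1 - t) * (1 + f t)"
proof (cases "t = 1")
  case True thus ?thesis using f1 f0 by simp
next
  case False
  have ne: "(1::'a) \<noteq> t" using False by simp
  have e: "f ((1 + t) / (1 - t)) = (f 1 + f t) / (f 1 - f t)" using sd_eq[OF sd ne] .
  have d1: "f (1 - t) \<noteq> 0" using fz False by simp
  have d2: "1 - f t \<noteq> 0" using finj[of t 1] f1 False by auto
  from e have "f (1 + t) / f (1 - t) = (1 + f t) / (1 - f t)" using fdiv f1 by simp
  thus ?thesis using d1 d2 by (simp add: frac_eq_eq algebra_simps)
qed

lemma fR: "t \<noteq> 1 \<Longrightarrow> f ((1 + t) / (1 - t)) = (1 + f t) / (1 - f t)"
  using sd_eq[OF sd, of 1 t] f1 by auto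

lemma fN:
  assumes c0: "c * c \<noteq> 1" and cx: "c * x \<noteq> 1"
  shows "f ((c - x) / (1 - c * x)) = (f c - f x) / (1 - f c * f x)"
proof -
  define X where "X = (1 + c) * (1 - x)"
  define Y where "Y = (c - 1) * (1 + x)"
  have XY1: "X + Y = 2 * (c - x)" unfolding X_def Y_def by (simp add: algebra_simps)
  have XY2: "X - Y = 2 * (1 - c * x)" unfolding X_def Y_def by (simp add: algebra_simps)
  have ne: "X \<noteq> Y" using XY2 cx two_a by auto
  have "(X + Y) / (X - Y) = (2 * (c - x)) / (2 * (1 - c * x))" by (simp only: XY1 XY2)
  also have "\<dots> = (c - x) / (1 - c * x)" using two_a by (rule mult_divide_mult_cancel_left)
  finally have arg: "(X + Y) / (X - Y) = (c - x) / (1 - c * x)" .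
  have e: "f ((c - x) / (1 - c * x)) = (f X + f Y) / (f X - f Y)"
    using sd_eq[OF sd ne] arg by simp
  define p where "p = f (1 + c)"
  define m where "m = f (1 - c)"
  define s where "s = f (1 + x)"
  define n where "n = f (1 - x)"
  have fX: "f X = p * n" unfolding X_def p_def n_def by (rule fmult)
  have "f Y = f (c - 1) * s" unfolding Y_def s_def by (rule fmult)
  moreover have "f (c - 1) = - m" unfolding m_def using fneg[of "1 - c"] by simp
  ultimately have fY: "f Y = - (m * s)" by simp
  have Ac: "p * (1 - f c) = m * (1 + f c)" unfolding p_def m_def by (rule fA)
  have Ax: "s * (1 - f x) = n * (1 + f x)" unfolding s_def n_def by (rule fA)
  have d1: "f X - f Y \<noteq> 0" using finj ne by simp
  have d2: "1 - f c * f x \<noteq> 0" using finj[of "c * x" 1] fmult f1 cx by auto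
  have "(p * n - m * s) * (1 - f c * f x) - (f c - f x) * (p * n + m * s)
        = (p * (1 - f c)) * (n * (1 + f x)) - (m * (1 + f c)) * (s * (1 - f x))"
    by (simp add: algebra_simps)
  also have "\<dots> = (m * (1 + f c)) * (n * (1 + f x)) - (m * (1 + f c)) * (n * (1 + f x))"
    by (simp only: Ac Ax)
  also have "\<dots> = 0" by simp
  finally have "(p * n - m * s) * (1 - f c * f x) = (f c - f x) * (p * n + m * s)" by simp
  hence "(f X + f Y) * (1 - f c * f x) = (f c - f x) * (f X - f Y)" using fX fY by simp
  thus ?thesis using e d1 d2 by (simp add: frac_eq_eq)
qed

end


lemma mob_alg:
  fixes a y :: "'a::field"
  assumes "a * y \<noteq> 1" "a * a \<noteq> 1"
  shows "(1 + a * ((a - y) / (1 - a * y))) / (1 - a * ((a - y) / (1 - a * y)))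
         = (1 + a * a - 2 * a * y) / (1 - a * a)"
proof -
  have d1: "1 - a * y \<noteq> 0" using assms by simp
  have d2: "1 - a * a \<noteq> 0" using assms by simp
  have n1: "1 + a * ((a - y) / (1 - a * y)) = (1 + a * a - 2 * a * y) / (1 - a * y)"
    using d1 by (simp add: field_simps)
  have n2: "1 - a * ((a - y) / (1 - a * y)) = (1 - a * a) / (1 - a * y)"
    using d1 by (simp add: field_simps)
  show ?thesis unfolding n1 n2 using d1 d2 by simp
qed

context sdm
begin

lemma fM:
  assumes c0: "c \<noteq> 0" and c1: "c * c \<noteq> 1"
  shows "f ((1 + c * c - 2 * c * x) / (1 - c * c)) = (1 + f c * f c - 2 * f c * f x) / (1 - f c * f c)"
proof -
  have fc1: "f c * f c \<noteq> 1" using finj[of "c * c" 1] fmult f1 c1 by auto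
  show ?thesis
  proof (cases "c * x = 1")
    case True
    have a: "1 + c * c - 2 * c * x = - (1 - c * c)" using True by (simp add: algebra_simps)
    have fx: "f c * f x = 1" using True fmult[of c x] f1 by simp
    have b: "1 + f c * f c - 2 * f c * f x = - (1 - f c * f c)" using fx by (simp add: algebra_simps)
    have "(1 + c * c - 2 * c * x) / (1 - c * c) = -1" using a c1 by (simp add: field_simps)
    moreover have "(1 + f c * f c - 2 * f c * f x) / (1 - f c * f c) = -1" using b fc1 by (simp add: field_simps)
    ultimately show ?thesis using fm1 by simp
  next
    case False
    define w where "w = (c - x) / (1 - c * x)"
    have fw: "f w = (f c - f x) / (1 - f c * f x)" unfolding w_def using fN[OF c1 False] .
    have cw: "c * w \<noteq> 1"
    proof
      assume "c * w = 1"
      hence "c * (c - x) = 1 - c * x" unfolding w_def using False by (simp add: field_simps)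
      hence "c * c = 1" by (simp add: algebra_simps)
      thus False using c1 by simp
    qed
    have e: "f ((1 + c * w) / (1 - c * w)) = (1 + f c * f w) / (1 - f c * f w)"
      using fR[OF cw] fmult by simp
    have fcx: "f c * f x \<noteq> 1" using finj[of "c * x" 1] fmult f1 False by auto
    have "(1 + c * w) / (1 - c * w) = (1 + c * c - 2 * c * x) / (1 - c * c)"
      unfolding w_def using mob_alg[OF False c1] .
    moreover have "(1 + f c * f w) / (1 - f c * f w) = (1 + f c * f c - 2 * f c * f x) / (1 - f c * f c)"
      unfolding fw using mob_alg[OF fcx fc1] .
    ultimately show ?thesis using e by simp
  qed
qed

lemma fgamma:
  fixes c :: 'a
  assumes c0: "c \<noteq> 0" and c1: "c * c \<noteq> 1" and c2: "c * c \<noteq> -1"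
  shows "\<exists>\<gamma>. \<gamma> \<noteq> 0 \<and> (\<forall>x. f (\<gamma> - x) = f \<gamma> - f x)"
proof -
  define D where "D = 1 - c * c"
  define c' where "c' = f c"
  define D' where "D' = 1 - c' * c'"
  define g where "g = (1 + c * c) / (2 * c)"
  define k where "k = 2 * c / D"
  have D0: "D \<noteq> 0" unfolding D_def using c1 by simp
  have c'0: "c' \<noteq> 0" unfolding c'_def using fz c0 by simp
  have fc1: "c' * c' \<noteq> 1" unfolding c'_def using finj[of "c * c" 1] fmult f1 c1 by auto
  have fc2: "c' * c' \<noteq> -1" unfolding c'_def using finj[of "c * c" "-1"] fmult fm1 c2 by auto
  have D'0: "D' \<noteq> 0" unfolding D'_def using fc1 by simp
  have g0: "g \<noteq> 0" unfolding g_def using c0 c2 two_a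
    by (metis add.commute add_eq_0_iff divide_eq_0_iff mult_eq_0_iff)
  have arg: "(1 + c * c - 2 * c * x) / (1 - c * c) = k * (g - x)" for x
    unfolding k_def g_def D_def using c0 two_a c1 by (simp add: field_simps)
  have star: "f k * f (g - x) = (1 + c' * c' - 2 * c' * f x) / D'" for x
    using fM[OF c0 c1, of x] unfolding arg c'_def D'_def by (simp add: fmult)
  have s1: "1 + c' * c' = 2 * c' * f g"
    using star[of g] f0 D'0 by simp
  have fg0: "f g \<noteq> 0" using fz g0 by simp
  have hk: "f k * f g = 2 * c' * f g / D'" using star[of 0] f0 s1 by simp
  have "f k = (f k * f g) / f g" using fg0 by simp
  also have "\<dots> = (2 * c' * f g / D') / f g" using hk by simp
  also have "\<dots> = 2 * c' / D'" using fg0 D'0 by simp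
  finally have fk: "f k = 2 * c' / D'" .
  have "f (g - x) = f g - f x" for x
  proof -
    have "2 * c' / D' * f (g - x) = (2 * c' * f g - 2 * c' * f x) / D'"
      using star[of x] s1 fk by simp
    hence "(2 * c') * f (g - x) = (2 * c') * (f g - f x)" using D'0 by (simp add: field_simps)
    moreover have "2 * c' \<noteq> 0" using c'0 two_b by simp
    ultimately show ?thesis by simp
  qed
  thus ?thesis using g0 by blast
qed

lemma fadd:
  fixes c :: 'a
  assumes c0: "c \<noteq> 0" and c1: "c * c \<noteq> 1" and c2: "c * c \<noteq> -1"
  shows "f (x + y) = f x + f y"
proof -
  obtain g where g0: "g \<noteq> 0" and hg: "\<And>x. f (g - x) = f g - f x" using fgamma[OF assms] by blast
  show ?thesis
  proof (cases "y = 0")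
    case True thus ?thesis using f0 by simp
  next
    case False
    define z where "z = y / g"
    have z0: "z \<noteq> 0" unfolding z_def using False g0 by simp
    have "x + y = z * (g - (- (x / z)))" unfolding z_def using g0 False by (simp add: field_simps)
    hence "f (x + y) = f z * f (g - (- (x / z)))" by (simp only: fmult)
    also have "\<dots> = f z * (f g - f (- (x / z)))" by (simp only: hg)
    also have "\<dots> = f z * f g + f z * f (x / z)" using fneg[of "x / z"] by (simp add: algebra_simps)
    also have "\<dots> = f (z * g) + f (z * (x / z))" by (simp only: fmult)
    also have "z * g = y" unfolding z_def using g0 by simp
    also have "z * (x / z) = x" using z0 by simp
    finally show ?thesis by simp
  qed
qed

end


lemma hom_from_succ:
  fixes g :: "'a::field \<Rightarrow> 'b::field"
  assumes gm: "\<And>x y. g (x * y) = g x * g y" and g0: "g 0 = 0" and g1: "g 1 = 1"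
    and gs: "\<And>x. g (x + 1) = g x + 1"
  shows "field_hom g"
  unfolding field_hom_def
proof (intro conjI allI g1)
  fix x y :: 'a
  show "g (x * y) = g x * g y" by (rule gm)
  show "g (x + y) = g x + g y"
  proof (cases "y = 0")
    case True thus ?thesis using g0 by simp
  next
    case False
    have "x + y = y * (x / y + 1)" using False by (simp add: field_simps)
    hence "g (x + y) = g y * (g (x / y) + 1)" by (simp only: gm gs)
    also have "\<dots> = g y * g (x / y) + g y" by (simp add: algebra_simps)
    also have "\<dots> = g (y * (x / y)) + g y" by (simp only: gm)
    also have "y * (x / y) = x" using False by simp
    finally show ?thesis by simp
  qed
qed

lemma q5_succ:
  fixes g :: "'a::field \<Rightarrow> 'b::field"
  assumes g0: "g 0 = 0" and g1: "g 1 = 1" and gn: "\<And>x. g (-x) = - g x" and g2: "g 2 = 2"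
    and a5: "(5::'a) = 0" and b5: "(5::'b) = 0" and U: "\<And>x::'a. x \<in> {0,1,2,3,4}"
  shows "g (x + 1) = g x + 1"
proof -
  have a3: "(3::'a) = -2" using a5 by (simp add: eq_neg_iff_add_eq_0)
  have a4: "(4::'a) = -1" using a5 by (simp add: eq_neg_iff_add_eq_0)
  have b3: "(3::'b) = -2" using b5 by (simp add: eq_neg_iff_add_eq_0)
  have g3: "g 3 = 3" by (simp only: a3 b3 gn g2)
  have g4: "g 4 = -1" by (simp only: a4 gn g1)
  have "x = 0 \<or> x = 1 \<or> x = 2 \<or> x = 3 \<or> x = 4" using U[of x] by simp
  thus ?thesis
  proof (elim disjE)
    assume "x = 0" thus ?thesis using g0 g1 by simp
  next
    assume "x = 1" thus ?thesis using g1 g2 by simp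
  next
    assume "x = 2" thus ?thesis using g2 g3 by simp
  next
    assume "x = 3" thus ?thesis using g3 g4 b3 by simp
  next
    assume "x = 4" thus ?thesis using g4 g0 a5 by simp
  qed
qed

lemma char_facts:
  fixes p l :: nat
  assumes "prime p" "l \<ge> 1" "card (UNIV :: 'a::{field,finite} set) = p ^ l"
  shows "CHAR('a) = p"
proof -
  have pos: "CHAR('a) > 0" by (rule finite_imp_CHAR_pos) simp
  have pr: "prime CHAR('a)" using prime_CHAR_semidom[OF pos] .
  have "CHAR('a) dvd p ^ l" using CHAR_dvd_CARD[where 'a='a] assms(3) by simp
  hence "CHAR('a) dvd p" using pr prime_dvd_power by blast
  thus ?thesis using pr assms(1) primes_dvd_imp_eq by blast
qed

lemma of_nat_ne0:
  assumes "CHAR('a::semiring_1) = p" "\<not> p dvd n"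
  shows "(of_nat n :: 'a) \<noteq> 0"
  using assms of_nat_eq_0_iff_char_dvd by metis



theorem proposition3p2:
  fixes f :: "'a::{field,finite} \<Rightarrow> 'b::field" and p l :: nat
  assumes "prime p" and "p > 2" and "CHAR('b) = p"
    and "l \<ge> 1" and "card (UNIV :: 'a set) = p ^ l"
    and "SD_map f"
  shows "field_hom f \<or>
         (card (UNIV :: 'a set) = 5 \<and> (\<exists>g::'a \<Rightarrow> 'b. field_hom g \<and> (\<forall>w. f w = g w ^ 3)))"
proof -
  have chA: "CHAR('a) = p" using char_facts[OF assms(1,4,5)] .
  have nd2: "\<not> p dvd 2" using assms(2) by (auto dest: dvd_imp_le)
  have two_a: "(2::'a) \<noteq> 0" using of_nat_ne0[OF chA nd2] by simp
  have two_b: "(2::'b) \<noteq> 0" using of_nat_ne0[OF assms(3) nd2] by simp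
  interpret sdm f using assms(6) two_a two_b by unfold_locales
  show ?thesis
  proof (cases "\<exists>c::'a. c \<noteq> 0 \<and> c * c \<noteq> 1 \<and> c * c \<noteq> -1")
    case True
    then obtain c :: 'a where c: "c \<noteq> 0" "c * c \<noteq> 1" "c * c \<noteq> -1" by blast
    have "field_hom f" unfolding field_hom_def using f1 fmult fadd[OF c] by blast
    thus ?thesis by simp
  next
    case False
    hence all: "\<And>c::'a. c = 0 \<or> c = 1 \<or> c = -1 \<or> c * c = -1"
      using square_eq_1_iff by blast
    have card5: "card (UNIV :: 'a set) \<le> 5"
    proof (cases "\<exists>i::'a. i * i = -1")
      case True
      then obtain i :: 'a where i: "i * i = -1" by blast
      have "UNIV \<subseteq> set [0, 1, -1, i, -i]"
      proof
        fix c :: 'a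
        have "c = 0 \<or> c = 1 \<or> c = -1 \<or> c * c = i * i" using all[of c] i by simp
        thus "c \<in> set [0, 1, -1, i, -i]" using square_eq_iff[of c i] by auto
      qed
      hence "card (UNIV :: 'a set) \<le> card (set [0, 1, -1, i, -i])"
        by (intro card_mono) auto
      also have "\<dots> \<le> 5" using card_length[of "[0, 1, -1, i, -i]"] by simp
      finally show ?thesis .
    next
      case False
      have "UNIV \<subseteq> set [0, 1, -1::'a]" using all False by auto
      hence "card (UNIV :: 'a set) \<le> card (set [0, 1, -1::'a])"
        by (intro card_mono) auto
      also have "\<dots> \<le> 3" using card_length[of "[0, 1, -1::'a]"] by simp
      finally show ?thesis by simp
    qed
    have l1: "l = 1"
    proof (rule ccontr)
      assume "l \<noteq> 1"
      hence "l \<ge> 2" using assms(4) by simp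
      hence "p ^ 2 \<le> p ^ l" using assms(2) by (intro power_increasing) auto
      moreover have "3 ^ 2 \<le> p ^ 2" using assms(2) by (intro power_mono) auto
      ultimately show False using card5 assms(5) by simp
    qed
    hence cardp: "card (UNIV :: 'a set) = p" using assms(5) by simp
    have p4: "p \<noteq> 4"
    proof
      assume "p = 4"
      hence "2 dvd p" by simp
      hence "2 = p" using primes_dvd_imp_eq[OF two_is_prime_nat assms(1)] by blast
      thus False using assms(2) by simp
    qed
    have "p = 3 \<or> p = 5" using card5 cardp assms(2) p4 by auto
    thus ?thesis
    proof
      assume p3: "p = 3"
      have a3: "(3::'a) = 0" using of_nat_CHAR[where 'a='a] chA p3 by simp
      have b3: "(3::'b) = 0" using of_nat_CHAR[where 'a='b] assms(3) p3 by simp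
      have m1: "(-1::'a) \<noteq> 1"
      proof
        assume "(-1::'a) = 1"
        hence "(2::'a) = 1 + -1" by (metis one_add_one)
        thus False using two_a by simp
      qed
      have sub: "set [0, 1, -1::'a] \<subseteq> UNIV" by simp
      have "card (set [0, 1, -1::'a]) = 3" using m1 by simp
      hence U: "set [0, 1, -1::'a] = UNIV" using card_subset_eq[OF _ sub] cardp p3 by simp
      have "f (x + 1) = f x + 1" for x
      proof -
        have "x = 0 \<or> x = 1 \<or> x = -1" using U by auto
        moreover have a2: "(2::'a) = -1" using a3 by (simp add: eq_neg_iff_add_eq_0)
        moreover have b2: "(2::'b) = -1" using b3 by (simp add: eq_neg_iff_add_eq_0)
        ultimately show ?thesis using f0 f1 fm1 by (auto simp: a2 b2)
      qed
      hence "field_hom f" using hom_from_succ[of f] fmult f0 f1 by blast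
      thus ?thesis by simp
    next
      assume p5: "p = 5"
      have a5: "(5::'a) = 0" using of_nat_CHAR[where 'a='a] chA p5 by simp
      have b5: "(5::'b) = 0" using of_nat_CHAR[where 'a='b] assms(3) p5 by simp
      have inj: "inj_on (of_nat :: nat \<Rightarrow> 'a) {..<5}"
        by (intro inj_onI) (auto simp: of_nat_eq_iff_cong_CHAR chA p5 cong_def)
      have "card ((of_nat :: nat \<Rightarrow> 'a) ` {..<5}) = 5" using card_image[OF inj] by simp
      hence "(of_nat :: nat \<Rightarrow> 'a) ` {..<5} = UNIV"
        using card_subset_eq[of UNIV "(of_nat :: nat \<Rightarrow> 'a) ` {..<5}"] cardp p5 by simp
      hence U: "x \<in> {0,1,2,3,4}" for x :: 'a
      proof -
        assume "(of_nat :: nat \<Rightarrow> 'a) ` {..<5} = UNIV"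
        then obtain n where n: "n < 5" "x = of_nat n" by (metis UNIV_I imageE lessThan_iff)
        hence "n = 0 \<or> n = 1 \<or> n = 2 \<or> n = 3 \<or> n = 4" by auto
        thus ?thesis using n by auto
      qed
      have a4: "(4::'a) = -1" using a5 by (simp add: eq_neg_iff_add_eq_0)
      define u where "u = f 2"
      have "u * u = f (2 * 2)" unfolding u_def by (simp only: fmult)
      also have "(2 * 2 :: 'a) = -1" using a4 by simp
      finally have uu: "u * u = -1" using fm1 by simp
      have "(u - 2) * (u + 2) = u * u - 4" by (simp add: algebra_simps)
      also have "\<dots> = - 5" using uu by simp
      also have "\<dots> = 0" using b5 by simp
      finally have "u = 2 \<or> u = -2" by (simp add: eq_neg_iff_add_eq_0)
      thus ?thesis
      proof
        assume "u = 2"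
        hence "f (x + 1) = f x + 1" for x
          using q5_succ[of f, OF f0 f1 fneg _ a5 b5 U] u_def by simp
        hence "field_hom f" using hom_from_succ[of f] fmult f0 f1 by blast
        thus ?thesis by simp
      next
        assume u2: "u = -2"
        define g where "g w = f w ^ 3" for w
        have "(10::'b) = 2 * 5" by simp
        hence b10: "(10::'b) = 0" using b5 by simp
        have b8: "(-8::'b) = 2" using b10 by (simp add: eq_neg_iff_add_eq_0)
        have g2: "g 2 = 2" unfolding g_def using u2 u_def b8 by simp
        have gm: "g (x * y) = g x * g y" for x y unfolding g_def by (simp add: fmult power_mult_distrib)
        have g0: "g 0 = 0" unfolding g_def using f0 by simp
        have g1: "g 1 = 1" unfolding g_def using f1 by simp
        have gn: "g (-x) = - g x" for x unfolding g_def using fneg by simp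
        have "g (x + 1) = g x + 1" for x using q5_succ[of g, OF g0 g1 gn g2 a5 b5 U] .
        hence hg: "field_hom g" using hom_from_succ[of g] gm g0 g1 by blast
        have b512: "(512::'b) = 2"
        proof -
          have "(512::'b) = 2 + 102 * 5" by simp
          thus ?thesis using b5 by simp
        qed
        have "f w = g w ^ 3" for w
        proof -
          have v: "f w = 0 \<or> f w = 1 \<or> f w = -1 \<or> f w = 2 \<or> f w = -2"
          proof -
            have "w = 0 \<or> w = 1 \<or> w = 2 \<or> w = 3 \<or> w = 4" using U[of w] by simp
            moreover have "f 3 = 2"
            proof -
              have a3': "(3::'a) = -2" using a5 by (simp add: eq_neg_iff_add_eq_0)
              have f2: "f 2 = -2" using u2 u_def by simp
              show ?thesis by (simp only: a3' fneg f2 minus_minus)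
            qed
            moreover have "f 4 = -1" by (simp only: a4 fm1)
            ultimately show ?thesis using f0 f1 u2 u_def by auto
          qed
          have "g w ^ 3 = f w ^ 9" unfolding g_def by (simp flip: power_mult)
          also have "\<dots> = f w" using v b512 by (elim disjE) simp_all
          finally show ?thesis by simp
        qed
        thus ?thesis using hg cardp p5 by blast
      qed
    qed
  qed
qed


end
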